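(* Let $H$ be a graded, connected, free and cofree Hopf algebra over $K$, with $\mathfrak g=\mathrm{Prim}(H)$. Then for all $n\ge1$, $\dim(\mathfrak g_n)=\dim\big(\big(\frac{H^+}{H^{+2}}\big)_n\big)$.
   Context: $K$ is a commutative field of characteristic $\neq2$. A graded connected Hopf algebra is a Hopf algebra $H=\bigoplus_{n\ge0}H_n$ over $K$ with homogeneous structure maps, $H_0=K$ and every $H_n$ finite-dimensional. $H^+=\bigoplus_{n\ge1}H_n$, $H^{+2}$ is the span of products of two elements of $H^+$, $\mathfrak g_n=\mathfrak g\cap H_n$. $H$ is free if there is a graded subspace $V$ with $T(V)\to H$ an algebra isomorphism; cofree if it is isomorphic as a graded coalgebra to $coT(W)$ ($T(W)$ with deconcatenation coproduct) for some graded $W$ with $W_0=0$. *)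

theory Defs
  imports Complex_Main
begin

text \<open>
  Elements of tensor powers H (x) H and H (x) H (x) H are represented by finite lists of pairs
  (finite sums of elementary tensors). Two such lists represent the same element of H (x) H iff
  they agree on all pairs of linear functionals (over a field the pairing with H* x H* separates
  the points of H (x) H); this is the relation teq.
\<close>

definition lfun :: "('k::field \<Rightarrow> 'h::ab_group_add \<Rightarrow> 'h) \<Rightarrow> ('h \<Rightarrow> 'k) \<Rightarrow> bool" where
  "lfun scale f \<longleftrightarrow> (\<forall>x y. f (x + y) = f x + f y) \<and> (\<forall>c x. f (scale c x) = c * f x)"

definition tev :: "('h \<Rightarrow> 'k::field) \<Rightarrow> ('h \<Rightarrow> 'k) \<Rightarrow> ('h \<times> 'h) list \<Rightarrow> 'k" where
  "tev f g xs = (\<Sum>(x, y)\<leftarrow>xs. f x * g y)"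

definition teq :: "('k::field \<Rightarrow> 'h::ab_group_add \<Rightarrow> 'h) \<Rightarrow> ('h \<times> 'h) list \<Rightarrow> ('h \<times> 'h) list \<Rightarrow> bool" where
  "teq scale xs ys \<longleftrightarrow>
     (\<forall>f g. lfun scale f \<longrightarrow> lfun scale g \<longrightarrow> tev f g xs = tev f g ys)"

definition graded_connected_hopf ::
  "('k::field \<Rightarrow> 'h::ring_1 \<Rightarrow> 'h) \<Rightarrow> (nat \<Rightarrow> 'h set) \<Rightarrow> ('h \<Rightarrow> ('h \<times> 'h) list)
     \<Rightarrow> ('h \<Rightarrow> 'k) \<Rightarrow> ('h \<Rightarrow> 'h) \<Rightarrow> bool" where
  "graded_connected_hopf scale Hn \<Delta> \<epsilon> S \<longleftrightarrow>
     \<comment> \<open>K-algebra\<close>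
     vector_space scale \<and>
     (\<forall>c x y. scale c (x * y) = scale c x * y \<and> scale c (x * y) = x * scale c y) \<and>
     \<comment> \<open>grading: H = direct sum of the subspaces H_n, each finite-dimensional\<close>
     (\<forall>n. module.subspace scale (Hn n)) \<and>
     (\<forall>n. \<exists>B. finite B \<and> Hn n \<subseteq> module.span scale B) \<and>
     UNIV \<subseteq> module.span scale (\<Union>n. Hn n) \<and>
     (\<forall>(x :: nat \<Rightarrow> 'h) N. (\<forall>n. x n \<in> Hn n) \<longrightarrow> (\<Sum>n<N. x n) = 0 \<longrightarrow> (\<forall>n<N. x n = 0)) \<and>
     \<comment> \<open>connected and multiplication homogeneous\<close>
     Hn 0 = range (\<lambda>c. scale c 1) \<and>
     (\<forall>m n x y. x \<in> Hn m \<longrightarrow> y \<in> Hn n \<longrightarrow> x * y \<in> Hn (m + n)) \<and>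
     \<comment> \<open>coproduct: linear, homogeneous, coassociative, algebra morphism\<close>
     (\<forall>x y. teq scale (\<Delta> (x + y)) (\<Delta> x @ \<Delta> y)) \<and>
     (\<forall>c x. teq scale (\<Delta> (scale c x)) (map (\<lambda>(a, b). (scale c a, b)) (\<Delta> x))) \<and>
     (\<forall>n x. x \<in> Hn n \<longrightarrow>
        (\<exists>zs. teq scale (\<Delta> x) zs \<and> (\<forall>(a, b)\<in>set zs. \<exists>i\<le>n. a \<in> Hn i \<and> b \<in> Hn (n - i)))) \<and>
     (\<forall>z f g h. lfun scale f \<longrightarrow> lfun scale g \<longrightarrow> lfun scale h \<longrightarrow>
        (\<Sum>(x, y)\<leftarrow>\<Delta> z. tev f g (\<Delta> x) * h y) = (\<Sum>(x, y)\<leftarrow>\<Delta> z. f x * tev g h (\<Delta> y))) \<and>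
     (\<forall>x y. teq scale (\<Delta> (x * y))
        (concat (map (\<lambda>(a, b). map (\<lambda>(a', b'). (a * a', b * b')) (\<Delta> y)) (\<Delta> x)))) \<and>
     teq scale (\<Delta> 1) [(1, 1)] \<and>
     \<comment> \<open>counit: linear, homogeneous, algebra morphism, counit laws\<close>
     lfun scale \<epsilon> \<and>
     (\<forall>n x. 0 < n \<longrightarrow> x \<in> Hn n \<longrightarrow> \<epsilon> x = 0) \<and>
     (\<forall>x y. \<epsilon> (x * y) = \<epsilon> x * \<epsilon> y) \<and> \<epsilon> 1 = 1 \<and>
     (\<forall>x. (\<Sum>(a, b)\<leftarrow>\<Delta> x. scale (\<epsilon> a) b) = x) \<and>
     (\<forall>x. (\<Sum>(a, b)\<leftarrow>\<Delta> x. scale (\<epsilon> b) a) = x) \<and>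
     \<comment> \<open>antipode: linear, homogeneous, antipode laws\<close>
     (\<forall>x y. S (x + y) = S x + S y) \<and> (\<forall>c x. S (scale c x) = scale c (S x)) \<and>
     (\<forall>n x. x \<in> Hn n \<longrightarrow> S x \<in> Hn n) \<and>
     (\<forall>x. (\<Sum>(a, b)\<leftarrow>\<Delta> x. S a * b) = scale (\<epsilon> x) 1) \<and>
     (\<forall>x. (\<Sum>(a, b)\<leftarrow>\<Delta> x. a * S b) = scale (\<epsilon> x) 1)"

definition graded_subspace :: "('k::field \<Rightarrow> 'h::ring_1 \<Rightarrow> 'h) \<Rightarrow> (nat \<Rightarrow> 'h set) \<Rightarrow> 'h set \<Rightarrow> bool" where
  "graded_subspace scale Hn V \<longleftrightarrow>
     module.subspace scale V \<and> V \<subseteq> module.span scale (\<Union>n. V \<inter> Hn n)"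

text \<open>Free: there is a graded subspace V such that the algebra map T(V) -> H induced by the
  inclusion is bijective, i.e. the words (products) in V span H, and for every finite linearly
  independent subset B of V, distinct words in B give distinct and linearly independent
  products (the words in a basis form a basis of T(V)).\<close>
definition free_hopf :: "('k::field \<Rightarrow> 'h::ring_1 \<Rightarrow> 'h) \<Rightarrow> (nat \<Rightarrow> 'h set) \<Rightarrow> bool" where
  "free_hopf scale Hn \<longleftrightarrow>
     (\<exists>V. graded_subspace scale Hn V \<and>
        UNIV \<subseteq> module.span scale (prod_list ` lists V) \<and>
        (\<forall>B. finite B \<longrightarrow> B \<subseteq> V \<longrightarrow> \<not> module.dependent scale B \<longrightarrow>
           inj_on prod_list (lists B) \<and> \<not> module.dependent scale (prod_list ` lists B)))"

text \<open>Cofree: there is a graded vector space W (W_0 = 0) and a graded coalgebra isomorphism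
  phi : coT(W) -> H, where coT(W) carries the deconcatenation coproduct and the counit
  killing all words of positive length. W is realised inside the type 'h (with the grading of H);
  this is no loss, since phi restricted to W is injective and graded. The linear map phi on T(W)
  is given by its values on words (a function on lists, multilinear in each letter).\<close>
definition cofree_hopf :: "('k::field \<Rightarrow> 'h::ring_1 \<Rightarrow> 'h) \<Rightarrow> (nat \<Rightarrow> 'h set)
     \<Rightarrow> ('h \<Rightarrow> ('h \<times> 'h) list) \<Rightarrow> ('h \<Rightarrow> 'k) \<Rightarrow> bool" where
  "cofree_hopf scale Hn \<Delta> \<epsilon> \<longleftrightarrow>
     (\<exists>W (\<phi> :: 'h list \<Rightarrow> 'h).
        graded_subspace scale Hn W \<and> W \<inter> Hn 0 = {0} \<and>
        \<comment> \<open>phi is multilinear on words in W\<close>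
        (\<forall>xs ys u v a b. xs \<in> lists W \<longrightarrow> ys \<in> lists W \<longrightarrow> u \<in> W \<longrightarrow> v \<in> W \<longrightarrow>
           \<phi> (xs @ [scale a u + scale b v] @ ys) = scale a (\<phi> (xs @ [u] @ ys)) + scale b (\<phi> (xs @ [v] @ ys))) \<and>
        \<comment> \<open>phi is graded\<close>
        (\<forall>w d. w \<in> lists W \<longrightarrow> (\<forall>i<length w. w ! i \<in> Hn (d i)) \<longrightarrow> \<phi> w \<in> Hn (\<Sum>i<length w. d i)) \<and>
        \<comment> \<open>phi is a coalgebra morphism\<close>
        (\<forall>w. w \<in> lists W \<longrightarrow>
           teq scale (\<Delta> (\<phi> w)) (map (\<lambda>i. (\<phi> (take i w), \<phi> (drop i w))) [0..<Suc (length w)])) \<and>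
        (\<forall>w. w \<in> lists W \<longrightarrow> \<epsilon> (\<phi> w) = (if w = [] then 1 else 0)) \<and>
        \<comment> \<open>phi is bijective\<close>
        UNIV \<subseteq> module.span scale (\<phi> ` lists W) \<and>
        (\<forall>B. finite B \<longrightarrow> B \<subseteq> W \<longrightarrow> \<not> module.dependent scale B \<longrightarrow>
           inj_on \<phi> (lists B) \<and> \<not> module.dependent scale (\<phi> ` lists B)))"

definition prim :: "('k::field \<Rightarrow> 'h::ring_1 \<Rightarrow> 'h) \<Rightarrow> ('h \<Rightarrow> ('h \<times> 'h) list) \<Rightarrow> 'h set" where
  "prim scale \<Delta> = {x. teq scale (\<Delta> x) [(x, 1), (1, x)]}"

definition Hplus :: "('k::field \<Rightarrow> 'h::ring_1 \<Rightarrow> 'h) \<Rightarrow> (nat \<Rightarrow> 'h set) \<Rightarrow> 'h set" where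
  "Hplus scale Hn = module.span scale (\<Union>n\<in>{1..}. Hn n)"

definition Hplus2 :: "('k::field \<Rightarrow> 'h::ring_1 \<Rightarrow> 'h) \<Rightarrow> (nat \<Rightarrow> 'h set) \<Rightarrow> 'h set" where
  "Hplus2 scale Hn = module.span scale {a * b | a b. a \<in> Hplus scale Hn \<and> b \<in> Hplus scale Hn}"

text \<open>Dimension of the degree-n part of H^+/H^{+2}: the degree-n part is the image of H_n in the
  quotient, whose kernel is H_n \<inter> H^{+2}; so its dimension is dim H_n - dim (H_n \<inter> H^{+2}).\<close>
definition indec_dim :: "('k::field \<Rightarrow> 'h::ring_1 \<Rightarrow> 'h) \<Rightarrow> (nat \<Rightarrow> 'h set) \<Rightarrow> nat \<Rightarrow> nat" where
  "indec_dim scale Hn n = vector_space.dim scale (Hn n) - vector_space.dim scale (Hn n \<inter> Hplus2 scale Hn)"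

end

theory Submission imports Defs begin

locale GH = vector_space scale for scale :: "'k::field \<Rightarrow> 'h::ring_1 \<Rightarrow> 'h" +
  fixes Hn :: "nat \<Rightarrow> 'h set"
  assumes sub: "\<And>n. subspace (Hn n)"
  and fin: "\<And>n. \<exists>B. finite B \<and> Hn n \<subseteq> span B"
  and ds: "\<And>(x::nat\<Rightarrow>'h) N. (\<forall>n. x n \<in> Hn n) \<Longrightarrow> (\<Sum>n<N. x n) = 0 \<Longrightarrow> \<forall>n<N. x n = 0"
begin

lemma ds_fin:
  assumes "finite K" "\<And>k. k \<in> K \<Longrightarrow> x k \<in> Hn k" "(\<Sum>k\<in>K. x k) = 0" "k \<in> K"
  shows "x k = 0"
proof -
  define y where "y n = (if n \<in> K then x n else 0)" for n
  define N where "N = Suc (Max K)"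
  have KN: "K \<subseteq> {..<N}" using assms(1) by (auto simp: N_def less_Suc_eq_le)
  have fK: "finite K" by (rule assms(1))
  have "(\<Sum>n<N. y n) = (\<Sum>n\<in>K. y n)"
    by (rule sum.mono_neutral_right) (use KN fK in \<open>auto simp: y_def\<close>)
  also have "\<dots> = 0" using assms(3) by (simp add: y_def)
  finally have "\<forall>n<N. y n = 0"
    by (intro ds) (auto simp: y_def assms(2) subspace_0[OF sub])
  then show ?thesis using KN assms(4) by (auto simp: y_def)
qed

lemma Hn_disj: assumes "j \<noteq> k" "v \<in> Hn j" "v \<in> Hn k" shows "v = 0"
proof -
  have "(if i = j then v else - v) \<in> Hn i" if "i \<in> {j,k}" for i
    using that assms subspace_neg[OF sub] by auto
  then show ?thesis using ds_fin[of "{j,k}" "\<lambda>i. if i = j then v else - v" j] assms(1) by auto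
qed

lemma proj:
  assumes T: "finite T" and dg: "\<And>y. y \<in> T \<Longrightarrow> y \<in> Hn (dg y)" and x: "x \<in> Hn m"
    and xs: "x = (\<Sum>y\<in>T. scale (c y) y)"
  shows "x = (\<Sum>y\<in>{y\<in>T. dg y = m}. scale (c y) y)"
proof -
  define K where "K = insert m (dg ` T)"
  define z where "z k = (\<Sum>y\<in>{y\<in>T. dg y = k}. scale (c y) y) - (if k = m then x else 0)" for k
  have fK: "finite K" using T by (simp add: K_def)
  have zH: "z k \<in> Hn k" for k
    unfolding z_def
    by (intro subspace_diff[OF sub] subspace_sum[OF sub] subspace_scale[OF sub])
       (auto simp: dg x subspace_0[OF sub])
  have "(\<Sum>k\<in>K. z k) = (\<Sum>k\<in>K. (\<Sum>y\<in>{y\<in>T. dg y = k}. scale (c y) y)) - (\<Sum>k\<in>K. (if k = m then x else 0))"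
    by (simp add: z_def sum_subtractf)
  also have "(\<Sum>k\<in>K. (\<Sum>y\<in>{y\<in>T. dg y = k}. scale (c y) y)) = (\<Sum>y\<in>T. scale (c y) y)"
    by (rule sum.group) (use T fK in \<open>auto simp: K_def\<close>)
  also have "(\<Sum>k\<in>K. (if k = m then x else 0)) = x" using fK by (simp add: K_def)
  finally have "(\<Sum>k\<in>K. z k) = 0" using xs by (simp only: diff_self)
  then have "z m = 0" using ds_fin[OF fK, where x=z and k=m] zH by (simp add: K_def)
  then show ?thesis by (simp add: z_def)
qed

lemma proj_span:
  assumes x: "x \<in> Hn m" "x \<in> span T" and dg: "\<And>y. y \<in> T \<Longrightarrow> y \<in> Hn (dg y)"
  shows "x \<in> span {y\<in>T. dg y = m}"
proof -
  obtain t r where t: "finite t" "t \<subseteq> T" "x = (\<Sum>a\<in>t. scale (r a) a)"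
    using x(2) unfolding span_explicit by blast
  have "x = (\<Sum>y\<in>{y\<in>t. dg y = m}. scale (r y) y)"
    by (rule proj[OF t(1) _ x(1) t(3)]) (use dg t(2) in auto)
  also have "\<dots> \<in> span {y\<in>T. dg y = m}"
    by (intro span_sum span_scale span_base) (use t(2) in auto)
  finally show ?thesis .
qed

lemma indep_union:
  assumes C: "\<And>k. C k \<subseteq> Hn k" "\<And>k. independent (C k)"
  shows "independent (\<Union>k. C k)"
  unfolding independent_explicit_module
proof (intro allI impI)
  fix t u v assume t: "finite t" "t \<subseteq> (\<Union>k. C k)" "(\<Sum>v\<in>t. scale (u v) v) = 0" "v \<in> t"
  have uniq: "a \<in> C j \<Longrightarrow> a \<in> C k \<Longrightarrow> j = k" for a j k
    using Hn_disj[of j k a] C dependent_zero[of "C j"] by blast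
  define dg where "dg a = (SOME k. a \<in> C k)" for a
  have dgC: "a \<in> t \<Longrightarrow> a \<in> C (dg a)" for a
    unfolding dg_def using t(2) by (metis (mono_tags, lifting) UN_iff subsetD someI_ex)
  define s where "s (k::nat) = (\<Sum>a\<in>{a\<in>t. dg a = k}. scale (u a) a)" for k
  have "(\<Sum>k\<in>dg ` t. s k) = 0"
    unfolding s_def by (subst sum.group) (use t in auto)
  moreover have "s k \<in> Hn k" for k
  proof -
    have "a \<in> Hn k" if "a \<in> {a\<in>t. dg a = k}" for a
      using that dgC C(1) by blast
    then show ?thesis unfolding s_def
      by (intro subspace_sum[OF sub] subspace_scale[OF sub]) 
  qed
  ultimately have "s (dg v) = 0" using t(1,4) ds_fin[of "dg ` t" s "dg v"] by blast
  moreover have "{a\<in>t. dg a = dg v} \<subseteq> C (dg v)" using dgC by force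
  ultimately show "u v = 0"
    unfolding s_def
    using independentD[OF C(2)[of "dg v"], of "{a\<in>t. dg a = dg v}" u v] t(1,4) by auto
qed

end

locale WS = GH scale Hn for scale :: "'k::field \<Rightarrow> 'h::ring_1 \<Rightarrow> 'h" and Hn +
  fixes U :: "'h set" and \<psi> :: "'h list \<Rightarrow> 'h"
  assumes Usub: "subspace U" and Ugr: "U \<subseteq> span (\<Union>n. U \<inter> Hn n)" and U0: "U \<inter> Hn 0 = {0}"
  and lin: "\<And>xs ys u v a b. xs \<in> lists U \<Longrightarrow> ys \<in> lists U \<Longrightarrow> u \<in> U \<Longrightarrow> v \<in> U \<Longrightarrow>
      \<psi> (xs @ [scale a u + scale b v] @ ys) = scale a (\<psi> (xs @ [u] @ ys)) + scale b (\<psi> (xs @ [v] @ ys))"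
  and gr: "\<And>w d. w \<in> lists U \<Longrightarrow> (\<forall>i<length w. w ! i \<in> Hn (d i)) \<Longrightarrow> \<psi> w \<in> Hn (\<Sum>i<length w. d i)"
  and spanU: "UNIV \<subseteq> span (\<psi> ` lists U)"
  and indep: "\<And>B. finite B \<Longrightarrow> B \<subseteq> U \<Longrightarrow> independent B \<Longrightarrow> inj_on \<psi> (lists B) \<and> independent (\<psi> ` lists B)"
begin

definition Cs where "Cs k = (SOME B. finite B \<and> B \<subseteq> U \<inter> Hn k \<and> independent B \<and> U \<inter> Hn k \<subseteq> span B)"

lemma Cs_ex: "\<exists>B. finite B \<and> B \<subseteq> U \<inter> Hn k \<and> independent B \<and> U \<inter> Hn k \<subseteq> span B"
proof -
  obtain B where B: "B \<subseteq> U \<inter> Hn k" "independent B" "U \<inter> Hn k \<subseteq> span B" "card B = dim (U \<inter> Hn k)"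
    by (rule basis_exists)
  obtain B0 where B0: "finite B0" "Hn k \<subseteq> span B0" using fin[of k] by blast
  have "B \<subseteq> span B0" using B(1) B0(2) by blast
  from independent_span_bound[OF B0(1) B(2) this] have "finite B" by simp
  then show ?thesis using B by blast
qed

lemma Cs: "finite (Cs k)" "Cs k \<subseteq> U" "Cs k \<subseteq> Hn k" "independent (Cs k)" "U \<inter> Hn k \<subseteq> span (Cs k)"
  using someI_ex[OF Cs_ex[of k]] unfolding Cs_def[symmetric] by auto

lemma Cs0: "Cs 0 = {}"
proof -
  have "Cs 0 \<subseteq> {0}" using Cs(2,3)[of 0] U0 by blast
  moreover have "0 \<notin> Cs 0" using Cs(4)[of 0] dependent_zero by blast
  ultimately show ?thesis by blast
qed

definition Call where "Call = (\<Union>k. Cs k)"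

lemma Call_indep: "independent Call"
  unfolding Call_def by (rule indep_union) (use Cs in auto)

lemma Call_U: "Call \<subseteq> U" unfolding Call_def using Cs(2) by blast

lemma Cs_uniq: "c \<in> Cs j \<Longrightarrow> c \<in> Cs k \<Longrightarrow> j = k"
  using Hn_disj[of j k c] Cs(3,4) dependent_zero[of "Cs j"] by blast

definition deg where "deg c = (SOME k. c \<in> Cs k)"

lemma deg: "c \<in> Cs k \<Longrightarrow> deg c = k"
  unfolding deg_def by (metis (mono_tags) Cs_uniq someI_ex)

lemma deg_Call: "c \<in> Call \<Longrightarrow> c \<in> Cs (deg c)"
  unfolding Call_def using deg by blast

lemma deg_pos: "c \<in> Call \<Longrightarrow> 1 \<le> deg c"
  using deg_Call[of c] Cs0 by (cases "deg c") auto

definition degs where "degs w = sum_list (map deg w)"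

lemma degs_simps[simp]: "degs [] = 0" "degs (c # w) = deg c + degs w"
  by (auto simp: degs_def)

lemma psi_gr: "w \<in> lists Call \<Longrightarrow> \<psi> w \<in> Hn (degs w)"
proof -
  assume w: "w \<in> lists Call"
  have wU: "w \<in> lists U" using w Call_U by auto
  have "\<forall>i<length w. w ! i \<in> Hn (deg (w ! i))"
  proof (intro allI impI)
    fix i assume "i < length w"
    then have "w ! i \<in> Call" using w by (simp add: in_lists_conv_set)
    then show "w ! i \<in> Hn (deg (w ! i))" using deg_Call Cs(3) by blast
  qed
  then have "\<psi> w \<in> Hn (\<Sum>i<length w. deg (w ! i))" by (rule gr[OF wU])
  moreover have "(\<Sum>i<length w. deg (w ! i)) = degs w"
    unfolding degs_def by (simp add: sum_list_sum_nth atLeast0LessThan)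
  ultimately show ?thesis by simp
qed

lemma U_span: "U \<subseteq> span Call"
proof -
  have "U \<inter> Hn n \<subseteq> span Call" for n
  proof -
    have "Cs n \<subseteq> Call" by (auto simp: Call_def)
    then show ?thesis using Cs(5)[of n] span_mono[of "Cs n" Call] by blast
  qed
  then have "(\<Union>n. U \<inter> Hn n) \<subseteq> span Call" by blast
  then have "span (\<Union>n. U \<inter> Hn n) \<subseteq> span Call" by (simp add: span_minimal)
  then show ?thesis using Ugr by blast
qed

lemma psi_zero: "xs \<in> lists U \<Longrightarrow> ys \<in> lists U \<Longrightarrow> \<psi> (xs @ [0] @ ys) = 0"
  using lin[of xs ys 0 0 0 0] subspace_0[OF Usub] by simp

lemma psi_span1:
  assumes xs: "xs \<in> lists U" and ys: "ys \<in> lists U" and A: "A \<subseteq> U" and u: "u \<in> span A"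
  shows "\<psi> (xs @ [u] @ ys) \<in> span ((\<lambda>a. \<psi> (xs @ [a] @ ys)) ` A)"
proof -
  have spA: "span A \<subseteq> U" using A Usub by (simp add: span_minimal)
  have "u \<in> span A \<and> \<psi> (xs @ [u] @ ys) \<in> span ((\<lambda>a. \<psi> (xs @ [a] @ ys)) ` A)"
    using u
  proof (induction rule: span_induct_alt)
    case base
    then show ?case using psi_zero[OF xs ys] by (simp add: span_zero)
  next
    case (step c x y)
    have x: "x \<in> U" using step A by blast
    have y: "y \<in> U" using step spA by blast
    have "\<psi> (xs @ [scale c x + scale 1 y] @ ys) = scale c (\<psi> (xs @ [x] @ ys)) + scale 1 (\<psi> (xs @ [y] @ ys))"
      by (rule lin[OF xs ys x y])
    then have eq: "\<psi> (xs @ [scale c x + y] @ ys) = scale c (\<psi> (xs @ [x] @ ys)) + \<psi> (xs @ [y] @ ys)" by simp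
    have h1: "\<psi> (xs @ [x] @ ys) \<in> span ((\<lambda>a. \<psi> (xs @ [a] @ ys)) ` A)"
      by (rule span_base) (use step in auto)
    moreover have "scale c (\<psi> (xs @ [x] @ ys)) + \<psi> (xs @ [y] @ ys) \<in> span ((\<lambda>a. \<psi> (xs @ [a] @ ys)) ` A)"
      using step h1 by (intro span_add span_scale) auto
    moreover have "scale c x + y \<in> span A"
      using step span_base[of x A] by (intro span_add span_scale) auto
    ultimately show ?case using eq by simp
  qed
  then show ?thesis by blast
qed

lemma psi_span: "ys \<in> lists U \<Longrightarrow> xs \<in> lists Call \<Longrightarrow> \<psi> (xs @ ys) \<in> span (\<psi> ` lists Call)"
proof (induction ys arbitrary: xs)
  case Nil
  then show ?case by (auto intro: span_base)
next
  case (Cons y ys)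
  have xsU: "xs \<in> lists U" using Cons.prems Call_U by auto
  have "\<psi> (xs @ [y] @ ys) \<in> span ((\<lambda>a. \<psi> (xs @ [a] @ ys)) ` Call)"
    by (rule psi_span1) (use xsU Cons.prems Call_U U_span in auto)
  also have "\<dots> \<subseteq> span (\<psi> ` lists Call)"
  proof (rule span_minimal)
    show "(\<lambda>a. \<psi> (xs @ [a] @ ys)) ` Call \<subseteq> span (\<psi> ` lists Call)"
      using Cons.IH[of "xs @ [_]"] Cons.prems by auto
  qed simp
  finally show ?case by simp
qed

lemma span_all: "x \<in> span (\<psi> ` lists Call)"
proof -
  have "\<psi> ` lists U \<subseteq> span (\<psi> ` lists Call)" using psi_span[of _ "[]"] by auto
  then have "span (\<psi> ` lists U) \<subseteq> span (\<psi> ` lists Call)" by (simp add: span_minimal)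
  then show ?thesis using spanU by blast
qed

lemma inj_Call: "inj_on \<psi> (lists Call)"
proof (rule inj_onI)
  fix w w' assume w: "w \<in> lists Call" "w' \<in> lists Call" "\<psi> w = \<psi> w'"
  let ?B = "set w \<union> set w'"
  have "?B \<subseteq> Call" using w by auto
  then have "inj_on \<psi> (lists ?B)"
    using indep[of ?B] Call_U independent_mono[OF Call_indep] by auto
  then show "w = w'" using w(3) by (auto dest: inj_onD)
qed

definition Wd where "Wd m = {w \<in> lists Call. degs w = m}"

lemma len_le_degs: "w \<in> lists Call \<Longrightarrow> length w \<le> degs w"
  by (induction w) (auto dest: deg_pos)

definition CC where "CC m = (\<Union>k\<in>{..m}. Cs k)"

lemma CC1: "CC m \<subseteq> Call" by (auto simp: CC_def Call_def)

lemma CC: "finite (CC m)" "CC m \<subseteq> Call" "CC m \<subseteq> U" "independent (CC m)"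
  using Cs(1) CC1 Call_U independent_mono[OF Call_indep CC1] by (auto simp: CC_def)

lemma Wd_sub: "Wd m \<subseteq> lists (CC m)"
proof
  fix w assume w: "w \<in> Wd m"
  have "c \<in> CC m" if c: "c \<in> set w" for c
  proof -
    have "deg c \<le> degs w" unfolding degs_def using c by (simp add: member_le_sum_list)
    then show ?thesis using w c deg_Call unfolding Wd_def CC_def by auto
  qed
  then show "w \<in> lists (CC m)" by auto
qed

lemma Wd_fin: "finite (Wd m)"
proof -
  have "Wd m \<subseteq> {xs. set xs \<subseteq> CC m \<and> length xs \<le> m}"
    using Wd_sub len_le_degs unfolding Wd_def by fastforce
  then show ?thesis using finite_lists_length_le[OF CC(1)] finite_subset by blast
qed

lemma CC_indep: "inj_on \<psi> (lists (CC m))" "independent (\<psi> ` lists (CC m))"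
  using indep[OF CC(1) CC(3) CC(4)] by auto

lemma Wd_indep: "inj_on \<psi> (Wd m)" "independent (\<psi> ` Wd m)"
  using CC_indep[of m] Wd_sub[of m] inj_on_subset independent_mono image_mono by metis+

lemma Wd_Hn: "\<psi> ` Wd m \<subseteq> Hn m"
  using psi_gr unfolding Wd_def by auto

definition dgy where "dgy y = degs (inv_into (lists Call) \<psi> y)"

lemma dgy: "y \<in> \<psi> ` lists Call \<Longrightarrow> y \<in> Hn (dgy y)"
  unfolding dgy_def by (metis f_inv_into_f inv_into_into psi_gr)

lemma dgy_psi: "w \<in> lists Call \<Longrightarrow> dgy (\<psi> w) = degs w"
  unfolding dgy_def using inj_Call by simp

lemma proj_words:
  assumes "x \<in> Hn m" "x \<in> span (\<psi> ` S)" "S \<subseteq> lists Call"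
  shows "x \<in> span (\<psi> ` {w\<in>S. degs w = m})"
proof -
  have "x \<in> span {y \<in> \<psi> ` S. dgy y = m}"
    by (rule proj_span[OF assms(1,2)]) (use dgy assms(3) in blast)
  also have "{y \<in> \<psi> ` S. dgy y = m} = \<psi> ` {w\<in>S. degs w = m}"
  proof (intro set_eqI iffI)
    fix y assume "y \<in> {y \<in> \<psi> ` S. dgy y = m}"
    then obtain w where w: "w \<in> S" "y = \<psi> w" "dgy y = m" by auto
    have wl: "w \<in> lists Call" using w(1) assms(3) by blast
    have "degs w = m" using dgy_psi[OF wl] w by simp
    then show "y \<in> \<psi> ` {w\<in>S. degs w = m}" using w by blast
  next
    fix y assume "y \<in> \<psi> ` {w\<in>S. degs w = m}"
    then obtain w where "w \<in> S" "y = \<psi> w" "degs w = m" by auto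
    then show "y \<in> {y \<in> \<psi> ` S. dgy y = m}" using dgy_psi[of w] assms(3) by auto
  qed
  finally show ?thesis .
qed

lemma Hn_span: "Hn m \<subseteq> span (\<psi> ` Wd m)"
  using proj_words[of _ m "lists Call"] span_all unfolding Wd_def by auto

lemma dim_Hn: "dim (Hn m) = card (Wd m)"
proof -
  have "dim (Hn m) = card (\<psi> ` Wd m)"
    by (rule dim_unique[OF Wd_Hn Hn_span Wd_indep(2) refl])
  then show ?thesis using card_image[OF Wd_indep(1)] by simp
qed

lemma Wd_rec:
  assumes m: "1 \<le> m"
  shows "Wd m = (\<Union>k\<in>{1..m}. \<Union>c\<in>Cs k. (\<lambda>w. c # w) ` Wd (m - k))"
proof safe
  fix w assume w: "w \<in> Wd m"
  then obtain c w' where cw: "w = c # w'" using m unfolding Wd_def by (cases w) auto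
  have c: "c \<in> Call" "w' \<in> lists Call" "deg c + degs w' = m" using w cw unfolding Wd_def by auto
  show "w \<in> (\<Union>k\<in>{1..m}. \<Union>c\<in>Cs k. (\<lambda>w. c # w) ` Wd (m - k))"
    using c deg_Call[of c] deg_pos[of c] cw unfolding Wd_def
    by (intro UN_I[of "deg c"] UN_I[of c]) auto
next
  fix k c w assume "k \<in> {1..m}" "c \<in> Cs k" "w \<in> Wd (m - k)"
  then show "c # w \<in> Wd m" using deg[of c k] unfolding Wd_def Call_def by auto
qed

lemma card_Wd:
  assumes m: "1 \<le> m"
  shows "card (Wd m) = (\<Sum>k\<in>{1..m}. card (Cs k) * card (Wd (m - k)))"
proof -
  have "card (Wd m) = (\<Sum>k\<in>{1..m}. card (\<Union>c\<in>Cs k. (\<lambda>w. c # w) ` Wd (m - k)))"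
    unfolding Wd_rec[OF m]
    by (rule card_UN_disjoint) (use Cs(1) Wd_fin Cs_uniq in auto)
  also have "\<dots> = (\<Sum>k\<in>{1..m}. \<Sum>c\<in>Cs k. card ((\<lambda>w. c # w) ` Wd (m - k)))"
    by (rule sum.cong[OF refl], rule card_UN_disjoint) (use Cs(1) Wd_fin in auto)
  also have "\<dots> = (\<Sum>k\<in>{1..m}. card (Cs k) * card (Wd (m - k)))"
    by (rule sum.cong[OF refl]) (simp add: card_image)
  finally show ?thesis .
qed

lemma Wd_one: "{w \<in> Wd m. length w = 1} = (\<lambda>c. [c]) ` Cs m"
proof safe
  fix w assume "w \<in> Wd m" "length w = 1"
  then obtain c where "w = [c]" "c \<in> Call" "deg c = m"
    unfolding Wd_def by (cases w) auto
  then show "w \<in> (\<lambda>c. [c]) ` Cs m" using deg_Call by auto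
next
  fix c assume "c \<in> Cs m"
  then show "[c] \<in> Wd m" using deg[of c m] unfolding Wd_def Call_def by auto
qed auto

lemma card_Wd_one: "card {w \<in> Wd m. length w = 1} = card (Cs m)"
  unfolding Wd_one by (simp add: card_image inj_on_def)


lemma Wd0: "Wd 0 = {[]}"
proof -
  have "w = []" if "w \<in> Wd 0" for w
    using that len_le_degs[of w] unfolding Wd_def by auto
  then show ?thesis unfolding Wd_def by auto
qed

lemma dim_Hn0: "dim (Hn 0) = 1"
  using dim_Hn[of 0] Wd0 by simp

lemma Wd_nonempty: "1 \<le> m \<Longrightarrow> w \<in> Wd m \<Longrightarrow> w \<noteq> []"
  unfolding Wd_def by auto

end

locale FR = WS scale Hn U prod_list for scale :: "'k::field \<Rightarrow> 'h::ring_1 \<Rightarrow> 'h" and Hn and U +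
  assumes ml: "\<And>c x y. scale c x * y = scale c (x * y)"
  and mr: "\<And>c x y. x * scale c y = scale c (x * y)"
  and hom: "\<And>x y i j. x \<in> Hn i \<Longrightarrow> y \<in> Hn j \<Longrightarrow> x * y \<in> Hn (i + j)"
begin

lemma bil:
  assumes a: "a \<in> span A" and b: "b \<in> span B"
  shows "a * b \<in> span {x * y |x y. x \<in> A \<and> y \<in> B}"
proof -
  let ?S = "span {x * y |x y. x \<in> A \<and> y \<in> B}"
  have inner: "x * b \<in> ?S" if x: "x \<in> A" for x
    using b
  proof (induction rule: span_induct_alt)
    case base
    then show ?case by (simp add: span_zero)
  next
    case (step c y z)
    have "x * (scale c y + z) = scale c (x * y) + x * z" by (simp add: distrib_left mr)
    moreover have "x * y \<in> ?S" using x step(1) by (intro span_base) blast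
    ultimately show ?case using step(2) by (simp add: span_add span_scale)
  qed
  show ?thesis
    using a
  proof (induction rule: span_induct_alt)
    case base
    then show ?case by (simp add: span_zero)
  next
    case (step c x z)
    have "(scale c x + z) * b = scale c (x * b) + z * b" by (simp add: distrib_right ml)
    then show ?case using step inner by (simp add: span_add span_scale)
  qed
qed

lemma Hplus_sub: "Hplus scale Hn \<subseteq> span (prod_list ` {w\<in>lists Call. w \<noteq> []})"
  unfolding Hplus_def
proof (rule span_minimal[OF _ subspace_span])
  show "(\<Union>n\<in>{1..}. Hn n) \<subseteq> span (prod_list ` {w\<in>lists Call. w \<noteq> []})"
  proof
    fix x assume "x \<in> (\<Union>n\<in>{1..}. Hn n)"
    then obtain k where k: "1 \<le> k" "x \<in> Hn k" by auto
    have "x \<in> span (prod_list ` Wd k)" using Hn_span k(2) by blast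
    moreover have "Wd k \<subseteq> {w\<in>lists Call. w \<noteq> []}"
      using Wd_nonempty[OF k(1)] unfolding Wd_def by auto
    ultimately show "x \<in> span (prod_list ` {w\<in>lists Call. w \<noteq> []})"
      using span_mono[OF image_mono] by blast
  qed
qed

lemma Hplus2_sub: "Hplus2 scale Hn \<subseteq> span (prod_list ` {w\<in>lists Call. 2 \<le> length w})"
  unfolding Hplus2_def
proof (rule span_minimal[OF _ subspace_span], rule subsetI)
  fix z assume "z \<in> {a * b |a b. a \<in> Hplus scale Hn \<and> b \<in> Hplus scale Hn}"
  then obtain a b where zab: "z = a * b" and ab: "a \<in> Hplus scale Hn" "b \<in> Hplus scale Hn" by blast
  let ?NE = "prod_list ` {w\<in>lists Call. w \<noteq> []}"
  have "a * b \<in> span {x * y |x y. x \<in> ?NE \<and> y \<in> ?NE}"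
    using bil ab Hplus_sub by blast
  moreover have "{x * y |x y. x \<in> ?NE \<and> y \<in> ?NE} \<subseteq> prod_list ` {w\<in>lists Call. 2 \<le> length w}"
  proof (rule subsetI)
    fix p assume "p \<in> {x * y |x y. x \<in> ?NE \<and> y \<in> ?NE}"
    then obtain u v where uv: "u \<in> lists Call" "u \<noteq> []" "v \<in> lists Call" "v \<noteq> []"
      and p: "p = prod_list u * prod_list v" by blast
    have "prod_list u * prod_list v = prod_list (u @ v)" by simp
    moreover have "u @ v \<in> {w\<in>lists Call. 2 \<le> length w}"
      using uv by (cases u; cases v) auto
    ultimately show "p \<in> prod_list ` {w\<in>lists Call. 2 \<le> length w}"
      using p by (metis image_eqI)
  qed
  ultimately show "z \<in> span (prod_list ` {w\<in>lists Call. 2 \<le> length w})"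
    using span_mono zab by blast
qed

lemma Q_sub:
  assumes w: "w \<in> Wd n" "2 \<le> length w"
  shows "prod_list w \<in> Hn n \<inter> Hplus2 scale Hn"
proof -
  have "prod_list w \<in> Hn n" using Wd_Hn w(1) by blast
  moreover obtain a w' where aw: "w = a # w'" using w(2) by (cases w) auto
  have wl: "a \<in> Call" "w' \<in> lists Call" using w(1) aw unfolding Wd_def by auto
  have "a \<in> Hn (deg a)" using deg_Call[OF wl(1)] Cs(3) by blast
  then have a: "a \<in> Hplus scale Hn"
    unfolding Hplus_def using deg_pos[OF wl(1)] by (intro span_base) auto
  have "w' \<noteq> []" using w(2) aw by auto
  then have "1 \<le> length w'" by (cases w') auto
  then have "1 \<le> degs w'" using len_le_degs[OF wl(2)] by linarith
  then have b: "prod_list w' \<in> Hplus scale Hn"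
    unfolding Hplus_def using psi_gr[OF wl(2)] by (intro span_base) auto
  have "prod_list w = a * prod_list w'" using aw by simp
  then have "prod_list w \<in> Hplus2 scale Hn"
    unfolding Hplus2_def using a b by (intro span_base) blast
  ultimately show ?thesis by blast
qed

lemma dimQ: "dim (Hn n \<inter> Hplus2 scale Hn) = card {w\<in>Wd n. 2 \<le> length w}"
proof -
  let ?Q = "{w\<in>Wd n. 2 \<le> length w}"
  have sub: "?Q \<subseteq> Wd n" by blast
  have h1: "Hn n \<inter> Hplus2 scale Hn \<subseteq> span (prod_list ` ?Q)"
  proof
    fix x assume x: "x \<in> Hn n \<inter> Hplus2 scale Hn"
    have x1: "x \<in> Hn n" using x by blast
    have x2: "x \<in> span (prod_list ` {w\<in>lists Call. 2 \<le> length w})" using x Hplus2_sub by blast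
    have "x \<in> span (prod_list ` {w \<in> {w\<in>lists Call. 2 \<le> length w}. degs w = n})"
      by (rule proj_words[OF x1 x2]) blast
    moreover have "{w \<in> {w\<in>lists Call. 2 \<le> length w}. degs w = n} = ?Q"
      unfolding Wd_def by auto
    ultimately show "x \<in> span (prod_list ` ?Q)" by simp
  qed
  have h2: "prod_list ` ?Q \<subseteq> Hn n \<inter> Hplus2 scale Hn" using Q_sub by blast
  have h3: "independent (prod_list ` ?Q)"
    by (rule independent_mono[OF Wd_indep(2)[of n] image_mono[OF sub]])
  have h4: "card (prod_list ` ?Q) = card ?Q"
    by (rule card_image[OF inj_on_subset[OF Wd_indep(1) sub]])
  show ?thesis by (rule dim_unique[OF h2 h1 h3 h4])
qed

lemma indec:
  assumes n: "1 \<le> n"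
  shows "indec_dim scale Hn n = card (Cs n)"
proof -
  let ?Q = "{w\<in>Wd n. 2 \<le> length w}" and ?L = "{w\<in>Wd n. length w = 1}"
  have eqW: "Wd n = ?Q \<union> ?L"
  proof (intro set_eqI iffI)
    fix w assume w: "w \<in> Wd n"
    then have "w \<noteq> []" using Wd_nonempty[OF n] by blast
    then have "length w = 1 \<or> 2 \<le> length w" by (cases w) (auto simp: Suc_le_eq)
    then show "w \<in> ?Q \<union> ?L" using w by auto
  qed auto
  have dj: "?Q \<inter> ?L = {}" by auto
  have f1: "finite ?Q" using Wd_fin[of n] by auto
  have f2: "finite ?L" using Wd_fin[of n] by auto
  have "card (?Q \<union> ?L) = card ?Q + card ?L" by (rule card_Un_disjoint[OF f1 f2 dj])
  with eqW have c: "card (Wd n) = card ?Q + card ?L" by simp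
  show ?thesis
    unfolding indec_dim_def dim_Hn[of n] dimQ[of n] c card_Wd_one[of n] by simp
qed

end

lemma vs_self: "vector_space ((*) :: 'k::field \<Rightarrow> 'k \<Rightarrow> 'k)"
  by unfold_locales (auto simp: algebra_simps)

lemma delta_fun:
  fixes scale :: "'k::field \<Rightarrow> 'h::ab_group_add \<Rightarrow> 'h"
  assumes vs: "vector_space scale" and B: "\<not> module.dependent scale B"
  shows "\<exists>f. lfun scale f \<and> (\<forall>y\<in>B. f y = (if y = p then 1 else 0))"
proof -
  interpret vector_space_pair scale "(*) :: 'k \<Rightarrow> 'k \<Rightarrow> 'k"
    using vs vs_self by (simp add: vector_space_pair_def)
  let ?f = "construct B (\<lambda>y. if y = p then (1::'k) else 0)"
  have "Vector_Spaces.linear scale (*) ?f" by (rule linear_construct) (use B in simp)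
  then have "lfun scale ?f" by (simp add: lfun_def Vector_Spaces.linear_iff)
  moreover have "\<forall>y\<in>B. ?f y = (if y = p then 1 else 0)"
    using construct_basis B by simp
  ultimately show ?thesis by blast
qed

lemma tev_append: "tev f g (xs @ ys) = tev f g xs + tev f g ys"
  by (simp add: tev_def)

lemma tev_scale:
  assumes "lfun scale f"
  shows "tev f g (map (\<lambda>(a, b). (scale c a, b)) xs) = c * tev f g xs"
  using assms by (induction xs) (auto simp: tev_def lfun_def algebra_simps)

lemma split_sum:
  "(\<Sum>i<Suc (length w). (if take i w = u then 1 else 0) * (if drop i w = v then 1 else (0::'k::field)))
     = (if w = u @ v then 1 else 0)"
proof -
  have "(if take i w = u then 1 else 0) * (if drop i w = v then 1 else (0::'k))
      = (if i = length u then (if w = u @ v then 1 else 0) else 0)" if i: "i < Suc (length w)" for i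
  proof (cases "take i w = u \<and> drop i w = v")
    case True
    then have "length u = i" using i by auto
    moreover have "w = u @ v" using True by (metis append_take_drop_id)
    ultimately show ?thesis using True by simp
  next
    case False
    have "\<not> (i = length u \<and> w = u @ v)" using False by auto
    then show ?thesis using False by auto
  qed
  then have "(\<Sum>i<Suc (length w). (if take i w = u then 1 else 0) * (if drop i w = v then 1 else (0::'k)))
     = (\<Sum>i<Suc (length w). (if i = length u then (if w = u @ v then 1 else 0) else 0))"
    by (intro sum.cong) auto
  also have "\<dots> = (if w = u @ v then 1 else 0)"
    by (auto simp: sum.delta)
  finally show ?thesis .
qed

locale CO = WS scale Hn W \<phi> for scale :: "'k::field \<Rightarrow> 'h::ring_1 \<Rightarrow> 'h" and Hn and W and \<phi> +
  fixes \<Delta> :: "'h \<Rightarrow> ('h \<times> 'h) list" and \<epsilon> :: "'h \<Rightarrow> 'k"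
  assumes dadd: "\<And>x y. teq scale (\<Delta> (x + y)) (\<Delta> x @ \<Delta> y)"
  and dscale: "\<And>c x. teq scale (\<Delta> (scale c x)) (map (\<lambda>(a, b). (scale c a, b)) (\<Delta> x))"
  and dphi: "\<And>w. w \<in> lists W \<Longrightarrow>
           teq scale (\<Delta> (\<phi> w)) (map (\<lambda>i. (\<phi> (take i w), \<phi> (drop i w))) [0..<Suc (length w)])"
  and eps_phi: "\<And>w. w \<in> lists W \<Longrightarrow> \<epsilon> (\<phi> w) = (if w = [] then 1 else 0)"
  and eps_lin: "lfun scale \<epsilon>" and eps1: "\<epsilon> 1 = 1"
  and H0: "Hn 0 = range (\<lambda>c. scale c 1)"
begin

lemma phi_nil: "\<phi> [] = 1"
proof -
  have "\<phi> [] \<in> Hn 0" using psi_gr[of "[]"] by simp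
  then obtain c where c: "\<phi> [] = scale c 1" using H0 by auto
  have "\<epsilon> (\<phi> []) = 1" using eps_phi[of "[]"] by simp
  moreover have "\<epsilon> (scale c 1) = c" using eps_lin eps1 by (simp add: lfun_def)
  ultimately have "c = 1" using c by simp
  then show ?thesis using c by simp
qed

definition TT where "TT f g x = tev f g (\<Delta> x)"

lemma TT_add: "lfun scale f \<Longrightarrow> lfun scale g \<Longrightarrow> TT f g (x + y) = TT f g x + TT f g y"
  using dadd[of x y] unfolding TT_def teq_def by (simp add: tev_append)

lemma TT_scale: "lfun scale f \<Longrightarrow> lfun scale g \<Longrightarrow> TT f g (scale c x) = c * TT f g x"
  using dscale[of c x] unfolding TT_def teq_def by (simp add: tev_scale)

lemma TT_sum:
  assumes "lfun scale f" "lfun scale g" "finite T"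
  shows "TT f g (\<Sum>y\<in>T. scale (r y) y) = (\<Sum>y\<in>T. r y * TT f g y)"
  using assms(3)
proof (induction T)
  case empty
  have "TT f g (scale 0 0) = 0" using TT_scale[OF assms(1,2), of 0 0] by simp
  then show ?case by simp
next
  case (insert a T)
  then show ?case using TT_add[OF assms(1,2)] TT_scale[OF assms(1,2)] by simp
qed

lemma TT_phi:
  assumes "w \<in> lists W" "lfun scale f" "lfun scale g"
  shows "TT f g (\<phi> w) = (\<Sum>i<Suc (length w). f (\<phi> (take i w)) * g (\<phi> (drop i w)))"
proof -
  have "TT f g (\<phi> w) = tev f g (map (\<lambda>i. (\<phi> (take i w), \<phi> (drop i w))) [0..<Suc (length w)])"
    using dphi[OF assms(1)] assms(2,3) unfolding TT_def teq_def by blast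
  also have "\<dots> = sum_list (map (\<lambda>i. f (\<phi> (take i w)) * g (\<phi> (drop i w))) [0..<Suc (length w)])"
    by (simp add: tev_def o_def)
  also have "\<dots> = (\<Sum>i<Suc (length w). f (\<phi> (take i w)) * g (\<phi> (drop i w)))"
    by (simp add: interv_sum_list_conv_sum_set_nat atLeast0LessThan)
  finally show ?thesis .
qed

lemma prim_iff: "x \<in> prim scale \<Delta> \<longleftrightarrow> (\<forall>f g. lfun scale f \<longrightarrow> lfun scale g \<longrightarrow> TT f g x = f x * g 1 + f 1 * g x)"
  unfolding prim_def teq_def TT_def by (simp add: tev_def)

lemma single_prim: "c \<in> W \<Longrightarrow> \<phi> [c] \<in> prim scale \<Delta>"
proof -
  assume c: "c \<in> W"
  have "TT f g (\<phi> [c]) = f (\<phi> [c]) * g 1 + f 1 * g (\<phi> [c])" if "lfun scale f" "lfun scale g" for f g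
  proof -
    have "TT f g (\<phi> [c]) = (\<Sum>i<Suc 1. f (\<phi> (take i [c])) * g (\<phi> (drop i [c])))"
      using TT_phi[of "[c]" f g] c that by simp
    also have "\<dots> = f 1 * g (\<phi> [c]) + f (\<phi> [c]) * g 1"
      by (simp add: phi_nil)
    finally show ?thesis by simp
  qed
  then show ?thesis unfolding prim_iff by simp
qed


lemma take_drop_lists: "w \<in> lists A \<Longrightarrow> take i w \<in> lists A \<and> drop i w \<in> lists A"
  by (auto dest: in_set_takeD in_set_dropD)

lemma prim_span:
  assumes n: "1 \<le> n"
  shows "prim scale \<Delta> \<inter> Hn n \<subseteq> span (\<phi> ` {w\<in>Wd n. length w = 1})"
proof
  fix x assume x: "x \<in> prim scale \<Delta> \<inter> Hn n"
  let ?P = "\<phi> ` Wd n"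
  have fP: "finite ?P" using Wd_fin by simp
  have "x \<in> span ?P" using Hn_span x by blast
  then obtain r where xr: "x = (\<Sum>y\<in>?P. scale (r y) y)" using span_finite[OF fP] by auto
  have CCW: "lists (CC n) \<subseteq> lists W" using CC(3) by auto
  have r0: "r (\<phi> w0) = 0" if w0: "w0 \<in> Wd n" "2 \<le> length w0" for w0
  proof -
    define u where "u = take 1 w0"
    define v where "v = drop 1 w0"
    have w0l: "w0 \<in> lists (CC n)" using w0(1) Wd_sub by blast
    have uv: "u \<in> lists (CC n)" "v \<in> lists (CC n)" "u \<noteq> []" "v \<noteq> []" "w0 = u @ v"
      using take_drop_lists[OF w0l, of 1] w0(2) unfolding u_def v_def by auto
    let ?B = "\<phi> ` lists (CC n)"
    have Bi: "independent ?B" by (rule CC_indep(2))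
    obtain f where f: "lfun scale f" "\<forall>y\<in>?B. f y = (if y = \<phi> u then 1 else 0)"
      using delta_fun[OF vector_space_axioms Bi] by blast
    obtain g where g: "lfun scale g" "\<forall>y\<in>?B. g y = (if y = \<phi> v then 1 else 0)"
      using delta_fun[OF vector_space_axioms Bi] by blast
    have fw: "f (\<phi> w) = (if w = u then 1 else 0)" if "w \<in> lists (CC n)" for w
    proof -
      have "(\<phi> w = \<phi> u) = (w = u)" using inj_onD[OF CC_indep(1)] that uv(1) by blast
      then show ?thesis using f(2) that by auto
    qed
    have gw: "g (\<phi> w) = (if w = v then 1 else 0)" if "w \<in> lists (CC n)" for w
    proof -
      have "(\<phi> w = \<phi> v) = (w = v)" using inj_onD[OF CC_indep(1)] that uv(2) by blast
      then show ?thesis using g(2) that by auto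
    qed
    have T1: "TT f g (\<phi> w) = (if w = w0 then 1 else 0)" if w: "w \<in> Wd n" for w
    proof -
      have wl: "w \<in> lists (CC n)" using w Wd_sub by blast
      have "TT f g (\<phi> w) = (\<Sum>i<Suc (length w). f (\<phi> (take i w)) * g (\<phi> (drop i w)))"
        using TT_phi[OF _ f(1) g(1)] wl CCW by blast
      also have "\<dots> = (\<Sum>i<Suc (length w). (if take i w = u then 1 else 0) * (if drop i w = v then 1 else 0))"
        by (rule sum.cong[OF refl]) (simp add: fw gw take_drop_lists[OF wl])
      also have "\<dots> = (if w = u @ v then 1 else 0)" by (rule split_sum)
      also have "\<dots> = (if w = w0 then 1 else 0)" using uv(5) by simp
      finally show ?thesis .
    qed
    have "TT f g x = (\<Sum>y\<in>?P. r y * TT f g y)"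
      unfolding xr by (rule TT_sum[OF f(1) g(1) fP])
    also have "\<dots> = (\<Sum>w\<in>Wd n. r (\<phi> w) * TT f g (\<phi> w))"
      by (simp add: sum.reindex[OF Wd_indep(1)])
    also have "\<dots> = (\<Sum>w\<in>Wd n. if w = w0 then r (\<phi> w0) else 0)"
      by (rule sum.cong[OF refl]) (simp add: T1)
    also have "\<dots> = r (\<phi> w0)" using w0(1) Wd_fin by simp
    finally have A: "TT f g x = r (\<phi> w0)" .
    have "TT f g x = f x * g 1 + f 1 * g x" using x f(1) g(1) prim_iff by blast
    moreover have "f 1 = 0" using fw[of "[]"] uv(3) phi_nil by simp
    moreover have "g 1 = 0" using gw[of "[]"] uv(4) phi_nil by simp
    ultimately show ?thesis using A by simp
  qed
  have sub: "\<phi> ` {w\<in>Wd n. length w = 1} \<subseteq> ?P" by blast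
  have "x = (\<Sum>y\<in>\<phi> ` {w\<in>Wd n. length w = 1}. scale (r y) y)"
    unfolding xr
  proof (rule sum.mono_neutral_right[OF fP sub], rule ballI)
    fix y assume y: "y \<in> ?P - \<phi> ` {w\<in>Wd n. length w = 1}"
    then obtain w where w: "w \<in> Wd n" "y = \<phi> w" "length w \<noteq> 1" by blast
    have "w \<noteq> []" using Wd_nonempty[OF n w(1)] .
    then have "2 \<le> length w" using w(3) by (cases w) (auto simp: Suc_le_eq)
    then show "scale (r y) y = 0" using r0 w by simp
  qed
  also have "\<dots> \<in> span (\<phi> ` {w\<in>Wd n. length w = 1})"
    by (intro span_sum span_scale span_base)
  finally show "x \<in> span (\<phi> ` {w\<in>Wd n. length w = 1})" .
qed

lemma dim_prim:
  assumes n: "1 \<le> n"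
  shows "dim (prim scale \<Delta> \<inter> Hn n) = card (Cs n)"
proof -
  let ?L = "{w\<in>Wd n. length w = 1}"
  have sub: "?L \<subseteq> Wd n" by blast
  have h2: "\<phi> ` ?L \<subseteq> prim scale \<Delta> \<inter> Hn n"
  proof
    fix y assume "y \<in> \<phi> ` ?L"
    then obtain c where c: "c \<in> Cs n" "y = \<phi> [c]" unfolding Wd_one by blast
    have "c \<in> W" using Cs(2) c(1) by blast
    then have "y \<in> prim scale \<Delta>" using single_prim c(2) by simp
    moreover have "y \<in> Hn n" using Wd_Hn \<open>y \<in> \<phi> ` ?L\<close> by blast
    ultimately show "y \<in> prim scale \<Delta> \<inter> Hn n" by blast
  qed
  have h3: "independent (\<phi> ` ?L)"
    by (rule independent_mono[OF Wd_indep(2)[of n] image_mono[OF sub]])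
  have h4: "card (\<phi> ` ?L) = card (Cs n)"
    using card_image[OF inj_on_subset[OF Wd_indep(1) sub]] card_Wd_one[of n] by simp
  show ?thesis by (rule dim_unique[OF h2 prim_span[OF n] h3 h4])
qed

end

lemma rec_eq:
  fixes D a b :: "nat \<Rightarrow> nat"
  assumes D0: "D 0 = 1"
    and Ra: "\<And>m. 1 \<le> m \<Longrightarrow> D m = (\<Sum>k\<in>{1..m}. a k * D (m - k))"
    and Rb: "\<And>m. 1 \<le> m \<Longrightarrow> D m = (\<Sum>k\<in>{1..m}. b k * D (m - k))"
  shows "1 \<le> m \<Longrightarrow> a m = b m"
proof (induction m rule: less_induct)
  case (less m)
  have split: "(\<Sum>k\<in>{1..m}. c k * D (m - k)) = (\<Sum>k\<in>{1..<m}. c k * D (m - k)) + c m" for c :: "nat \<Rightarrow> nat"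
  proof -
    have "{1..m} = insert m {1..<m}" using less.prems by auto
    then show ?thesis using D0 by (simp add: add.commute)
  qed
  have "(\<Sum>k\<in>{1..<m}. a k * D (m - k)) = (\<Sum>k\<in>{1..<m}. b k * D (m - k))"
    using less.IH by (intro sum.cong) auto
  then show ?case using Ra[OF less.prems] Rb[OF less.prems] split[of a] split[of b] by simp
qed

lemma prod_list_gr:
  assumes H0: "1 \<in> Hn 0" and hom: "\<And>x y i j. x \<in> Hn i \<Longrightarrow> y \<in> Hn j \<Longrightarrow> x * y \<in> Hn (i + j)"
  shows "(\<forall>i<length w. w ! i \<in> Hn (d i)) \<Longrightarrow> prod_list w \<in> Hn (\<Sum>i<length w. d i)"
proof (induction w arbitrary: d)
  case Nil
  then show ?case using H0 by simp
next
  case (Cons a w)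
  have "\<forall>i<length w. w ! i \<in> Hn (d (Suc i))"
  proof (intro allI impI)
    fix i assume "i < length w"
    then show "w ! i \<in> Hn (d (Suc i))" using Cons.prems[rule_format, of "Suc i"] by simp
  qed
  then have "prod_list w \<in> Hn (\<Sum>i<length w. d (Suc i))"
    using Cons.IH[of "\<lambda>i. d (Suc i)"] by blast
  moreover have "a \<in> Hn (d 0)" using Cons.prems[rule_format, of 0] by simp
  ultimately have "a * prod_list w \<in> Hn (d 0 + (\<Sum>i<length w. d (Suc i)))" using hom by blast
  then show ?case by (simp only: length_Cons sum.lessThan_Suc_shift prod_list.Cons)
qed

theorem lemma4:
  fixes scale :: "'k::field \<Rightarrow> 'h::ring_1 \<Rightarrow> 'h"
    and Hn :: "nat \<Rightarrow> 'h set"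
    and \<Delta> :: "'h \<Rightarrow> ('h \<times> 'h) list"
    and \<epsilon> :: "'h \<Rightarrow> 'k"
    and S :: "'h \<Rightarrow> 'h"
  assumes "CHAR('k) \<noteq> 2"
    and "graded_connected_hopf scale Hn \<Delta> \<epsilon> S"
    and "free_hopf scale Hn"
    and "cofree_hopf scale Hn \<Delta> \<epsilon>"
    and "n \<ge> 1"
  shows "vector_space.dim scale (prim scale \<Delta> \<inter> Hn n) = indec_dim scale Hn n"
proof -
  note H = assms(2)[unfolded graded_connected_hopf_def]
  have vs: "vector_space scale" using H by (elim conjE) assumption
  have sub0: "\<forall>n. module.subspace scale (Hn n)" using H by (elim conjE) assumption
  have fin0: "\<forall>n. \<exists>B. finite B \<and> Hn n \<subseteq> module.span scale B" using H by (elim conjE) assumption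
  have ds0: "\<forall>(x :: nat \<Rightarrow> 'h) N. (\<forall>n. x n \<in> Hn n) \<longrightarrow> (\<Sum>n<N. x n) = 0 \<longrightarrow> (\<forall>n<N. x n = 0)"
    using H by (elim conjE) assumption
  have mlr: "\<forall>c x y. scale c (x * y) = scale c x * y \<and> scale c (x * y) = x * scale c y"
    using H by (elim conjE) assumption
  have H0: "Hn 0 = range (\<lambda>c. scale c 1)" using H by (elim conjE) assumption
  have hom0: "\<forall>m n x y. x \<in> Hn m \<longrightarrow> y \<in> Hn n \<longrightarrow> x * y \<in> Hn (m + n)" using H by (elim conjE) assumption
  have dadd0: "\<forall>x y. teq scale (\<Delta> (x + y)) (\<Delta> x @ \<Delta> y)" using H by (elim conjE) assumption
  have dscale0: "\<forall>c x. teq scale (\<Delta> (scale c x)) (map (\<lambda>(a, b). (scale c a, b)) (\<Delta> x))"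
    using H by (elim conjE) assumption
  have eps_lin: "lfun scale \<epsilon>" using H by (elim conjE) assumption
  have eps1: "\<epsilon> 1 = 1" using H by (elim conjE) assumption
  have sub: "\<And>n. module.subspace scale (Hn n)" using sub0 by blast
  have fin: "\<And>n. \<exists>B. finite B \<and> Hn n \<subseteq> module.span scale B" using fin0 by blast
  have ds: "\<And>(x::nat\<Rightarrow>'h) N. (\<forall>n. x n \<in> Hn n) \<Longrightarrow> (\<Sum>n<N. x n) = 0 \<Longrightarrow> \<forall>n<N. x n = 0"
    using ds0 by blast
  have ml: "\<And>c x y. scale c x * y = scale c (x * y)" using mlr by metis
  have mr: "\<And>c x y. x * scale c y = scale c (x * y)" using mlr by metis
  have hom: "\<And>x y i j. x \<in> Hn i \<Longrightarrow> y \<in> Hn j \<Longrightarrow> x * y \<in> Hn (i + j)" using hom0 by blast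
  have dadd: "\<And>x y. teq scale (\<Delta> (x + y)) (\<Delta> x @ \<Delta> y)" using dadd0 by blast
  have dscale: "\<And>c x. teq scale (\<Delta> (scale c x)) (map (\<lambda>(a, b). (scale c a, b)) (\<Delta> x))" using dscale0 by blast
  interpret GH scale Hn by (rule GH.intro[OF vs]) (unfold_locales, use sub fin ds in auto)
  have one0: "1 \<in> Hn 0" using H0 scale_one by (metis rangeI)
  obtain V where V: "graded_subspace scale Hn V" "UNIV \<subseteq> span (prod_list ` lists V)"
    "\<And>B. finite B \<Longrightarrow> B \<subseteq> V \<Longrightarrow> independent B \<Longrightarrow> inj_on prod_list (lists B) \<and> independent (prod_list ` lists B)"
    using assms(3) unfolding free_hopf_def by blast
  have V0: "V \<inter> Hn 0 = {0}"
  proof (rule ccontr)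
    assume "V \<inter> Hn 0 \<noteq> {0}"
    moreover have "0 \<in> V \<inter> Hn 0" using V(1) sub[of 0] unfolding graded_subspace_def by (simp add: subspace_0)
    ultimately obtain u where u: "u \<in> V" "u \<in> Hn 0" "u \<noteq> 0" by blast
    then obtain c where c: "u = scale c 1" using H0 by auto
    have uu: "u * u = scale c u" using c ml by simp
    have "independent {u}" using u(3) by simp
    then have I: "inj_on prod_list (lists {u})" "independent (prod_list ` lists {u})"
      using V(3)[of "{u}"] u(1) by auto
    show False
    proof (cases "c = 1")
      case True
      then have "prod_list [u, u] = prod_list [u]" using uu by simp
      then show False using inj_onD[OF I(1), of "[u,u]" "[u]"] by simp
    next
      case False
      have ne: "scale c u \<noteq> u"
      proof
        assume "scale c u = u"
        then have "scale c u = scale 1 u" by simp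
        then show False using False u(3) by (simp only: scale_cancel_right) simp
      qed
      let ?P = "prod_list ` lists {u}"
      have l2: "[u, u] \<in> lists {u}" "[u] \<in> lists {u}" by auto
      have "prod_list [u, u] = scale c u" using uu by simp
      then have su: "scale c u \<in> ?P" using l2(1) by (metis image_eqI)
      have "prod_list [u] = u" by simp
      then have "u \<in> ?P" using l2(2) by (metis image_eqI)
      then have "u \<in> ?P - {scale c u}" using ne by (simp add: eq_commute)
      then have "scale c u \<in> span (?P - {scale c u})" by (intro span_scale span_base)
      then have "dependent ?P" unfolding dependent_def using su by blast
      then show False using I(2) by simp
    qed
  qed
  interpret F: FR scale Hn V
  proof (unfold_locales)
    show "subspace V" "V \<subseteq> span (\<Union>n. V \<inter> Hn n)" using V(1) unfolding graded_subspace_def by auto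
    show "V \<inter> Hn 0 = {0}" by (rule V0)
    show "UNIV \<subseteq> span (prod_list ` lists V)" by (rule V(2))
  next
    fix xs ys u v a b
    show "prod_list (xs @ [scale a u + scale b v] @ ys) = scale a (prod_list (xs @ [u] @ ys)) + scale b (prod_list (xs @ [v] @ ys))"
      by (simp add: distrib_left distrib_right ml mr scale_right_distrib mult.assoc)
  next
    fix w d show "(\<forall>i<length w. w ! i \<in> Hn (d i)) \<Longrightarrow> prod_list w \<in> Hn (\<Sum>i<length w. d i)"
      by (rule prod_list_gr[OF one0 hom])
  next
    fix B show "finite B \<Longrightarrow> B \<subseteq> V \<Longrightarrow> independent B \<Longrightarrow> inj_on prod_list (lists B) \<and> independent (prod_list ` lists B)"
      by (rule V(3))
  qed (use ml mr hom in auto)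
  obtain W and \<phi> :: "'h list \<Rightarrow> 'h" where Wall:
       "graded_subspace scale Hn W \<and> W \<inter> Hn 0 = {0} \<and>
        (\<forall>xs ys u v a b. xs \<in> lists W \<longrightarrow> ys \<in> lists W \<longrightarrow> u \<in> W \<longrightarrow> v \<in> W \<longrightarrow>
           \<phi> (xs @ [scale a u + scale b v] @ ys) = scale a (\<phi> (xs @ [u] @ ys)) + scale b (\<phi> (xs @ [v] @ ys))) \<and>
        (\<forall>w d. w \<in> lists W \<longrightarrow> (\<forall>i<length w. w ! i \<in> Hn (d i)) \<longrightarrow> \<phi> w \<in> Hn (\<Sum>i<length w. d i)) \<and>
        (\<forall>w. w \<in> lists W \<longrightarrow>
           teq scale (\<Delta> (\<phi> w)) (map (\<lambda>i. (\<phi> (take i w), \<phi> (drop i w))) [0..<Suc (length w)])) \<and>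
        (\<forall>w. w \<in> lists W \<longrightarrow> \<epsilon> (\<phi> w) = (if w = [] then 1 else 0)) \<and>
        UNIV \<subseteq> module.span scale (\<phi> ` lists W) \<and>
        (\<forall>B. finite B \<longrightarrow> B \<subseteq> W \<longrightarrow> \<not> module.dependent scale B \<longrightarrow>
           inj_on \<phi> (lists B) \<and> \<not> module.dependent scale (\<phi> ` lists B))"
    using assms(4) unfolding cofree_hopf_def by (elim exE) (rule that, assumption)
  have W1: "graded_subspace scale Hn W" using Wall by (elim conjE) assumption
  have W2: "W \<inter> Hn 0 = {0}" using Wall by (elim conjE) assumption
  have W3: "\<forall>xs ys u v a b. xs \<in> lists W \<longrightarrow> ys \<in> lists W \<longrightarrow> u \<in> W \<longrightarrow> v \<in> W \<longrightarrow>
           \<phi> (xs @ [scale a u + scale b v] @ ys) = scale a (\<phi> (xs @ [u] @ ys)) + scale b (\<phi> (xs @ [v] @ ys))"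
    using Wall by (elim conjE) assumption
  have W4: "\<forall>w d. w \<in> lists W \<longrightarrow> (\<forall>i<length w. w ! i \<in> Hn (d i)) \<longrightarrow> \<phi> w \<in> Hn (\<Sum>i<length w. d i)"
    using Wall by (elim conjE) assumption
  have W5: "\<forall>w. w \<in> lists W \<longrightarrow>
           teq scale (\<Delta> (\<phi> w)) (map (\<lambda>i. (\<phi> (take i w), \<phi> (drop i w))) [0..<Suc (length w)])"
    using Wall by (elim conjE) assumption
  have W6: "\<forall>w. w \<in> lists W \<longrightarrow> \<epsilon> (\<phi> w) = (if w = [] then 1 else 0)"
    using Wall by (elim conjE) assumption
  have W7: "UNIV \<subseteq> module.span scale (\<phi> ` lists W)" using Wall by (elim conjE) assumption
  have W8: "\<forall>B. finite B \<longrightarrow> B \<subseteq> W \<longrightarrow> \<not> module.dependent scale B \<longrightarrow>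
           inj_on \<phi> (lists B) \<and> \<not> module.dependent scale (\<phi> ` lists B)"
    using Wall by (elim conjE) assumption
  interpret C: CO scale Hn W \<phi> \<Delta> \<epsilon>
  proof (unfold_locales)
    show "subspace W" "W \<subseteq> span (\<Union>n. W \<inter> Hn n)" using W1 unfolding graded_subspace_def by auto
    show "W \<inter> Hn 0 = {0}" by (rule W2)
    show "UNIV \<subseteq> span (\<phi> ` lists W)" by (rule W7)
    show "lfun scale \<epsilon>" by (rule eps_lin)
    show "\<epsilon> 1 = 1" by (rule eps1)
    show "Hn 0 = range (\<lambda>c. scale c 1)" by (rule H0)
  next
    fix xs ys u v a b
    assume "xs \<in> lists W" "ys \<in> lists W" "u \<in> W" "v \<in> W"
    then show "\<phi> (xs @ [scale a u + scale b v] @ ys) = scale a (\<phi> (xs @ [u] @ ys)) + scale b (\<phi> (xs @ [v] @ ys))"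
      using W3 by blast
  next
    fix w d assume "w \<in> lists W" "\<forall>i<length w. w ! i \<in> Hn (d i)"
    then show "\<phi> w \<in> Hn (\<Sum>i<length w. d i)" using W4 by blast
  next
    fix B assume "finite B" "B \<subseteq> W" "independent B"
    then show "inj_on \<phi> (lists B) \<and> independent (\<phi> ` lists B)" using W8 by blast
  next
    fix x y show "teq scale (\<Delta> (x + y)) (\<Delta> x @ \<Delta> y)" by (rule dadd)
  next
    fix c x show "teq scale (\<Delta> (scale c x)) (map (\<lambda>(a, b). (scale c a, b)) (\<Delta> x))" by (rule dscale)
  next
    fix w assume "w \<in> lists W"
    then show "teq scale (\<Delta> (\<phi> w)) (map (\<lambda>i. (\<phi> (take i w), \<phi> (drop i w))) [0..<Suc (length w)])"
      using W5 by blast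
  next
    fix w assume "w \<in> lists W"
    then show "\<epsilon> (\<phi> w) = (if w = [] then 1 else 0)" using W6 by blast
  qed
  have RF: "dim (Hn m) = (\<Sum>k\<in>{1..m}. card (F.Cs k) * dim (Hn (m - k)))" if "1 \<le> m" for m
    using F.card_Wd[OF that] F.dim_Hn by simp
  have RC: "dim (Hn m) = (\<Sum>k\<in>{1..m}. card (C.Cs k) * dim (Hn (m - k)))" if "1 \<le> m" for m
    using C.card_Wd[OF that] C.dim_Hn by simp
  have "card (F.Cs n) = card (C.Cs n)"
    by (rule rec_eq[of "\<lambda>m. dim (Hn m)", OF F.dim_Hn0 RF RC assms(5)])
  then show ?thesis using F.indec[OF assms(5)] C.dim_prim[OF assms(5)] by simp
qed

end
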